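(* For each $\sigma\in\{\underline{21}3,\ \underline{31}2,\ 2\underline{13},\ 2\underline{31},\ 3\underline{12}\}$, the set $\mathrm{Sort}(\mathrm{SC}_\sigma)$ is not a permutation class.
   Context: $\mathfrak S_n$ is the set of permutations of $\{1,\dots,n\}$. A permutation $\pi$ contains a (classical) permutation $\tau$ if some subsequence of $\pi$ has the same relative order as $\tau$. A permutation class is a set $\Pi$ of permutations such that every permutation contained in some $\pi\in\Pi$ is also in $\Pi$. A vincular pattern is a permutation with some entries underlined; a sequence contains it if it has a subsequence with the same relative order in which entries corresponding to adjacent underlined entries occupy consecutive positions (e.g. an occurrence of $\underline{21}3$ is $a_ja_{j+1}a_l$ with $l>j+1$ and $a_{j+1}<a_j<a_l$; an occurrence of $2\underline{13}$ is $a_ia_ja_{j+1}$ with $i<j$ and $a_j<a_i<a_{j+1}$). For a pattern $\sigma$, the map $\mathrm{SC}_\sigma$ acts on $\tau$: read entries left to right; when the next entry $x$ is read, if pushing $x$ yields a stack whose entries read top to bottom (stack adjacency = consecutive positions) avoid $\sigma$, push $x$; otherwise pop the top stack entry to the output and repeat. At the end pop all remaining entries; the output is $\mathrm{SC}_\sigma(\tau)$. West's stack-sorting map is $s=\mathrm{SC}_{21}$. $\mathrm{Sort}_n(\mathrm{SC}_\sigma)=\{\tau\in\mathfrak S_n : s(\mathrm{SC}_\sigma(\tau))=12\cdots n\}$ and $\mathrm{Sort}(\mathrm{SC}_\sigma)=\bigcup_{n\ge1}\mathrm{Sort}_n(\mathrm{SC}_\sigma)$. *)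

theory Defs
  imports Main
begin

text \<open>A vincular pattern is a pair (p, A): p is a permutation (list) and
  k \<in> A means that the entries at positions k and k+1 of p (0-based) are underlined
  together, i.e. they must occupy consecutive positions in an occurrence.
  A classical pattern has A = {}.\<close>

type_synonym vpattern = "nat list \<times> nat set"

definition same_order :: "nat list \<Rightarrow> nat list \<Rightarrow> bool" where
  "same_order xs ys \<longleftrightarrow> length xs = length ys \<and>
     (\<forall>i < length xs. \<forall>j < length xs. xs ! i < xs ! j \<longleftrightarrow> ys ! i < ys ! j)"

definition contains :: "nat list \<Rightarrow> vpattern \<Rightarrow> bool" where
  "contains w \<sigma> \<longleftrightarrow> (\<exists>is :: nat list.
     length is = length (fst \<sigma>) \<and> sorted_wrt (<) is \<and> (\<forall>i \<in> set is. i < length w) \<and>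
     (\<forall>k \<in> snd \<sigma>. Suc k < length is \<longrightarrow> is ! Suc k = Suc (is ! k)) \<and>
     same_order (map (\<lambda>i. w ! i) is) (fst \<sigma>))"

text \<open>The stack machine SC_sigma. The stack is a list whose head is the top, so the
  list itself reads the stack top to bottom.  sc_run \<sigma> input stack = output.\<close>

function sc_run :: "vpattern \<Rightarrow> nat list \<Rightarrow> nat list \<Rightarrow> nat list" where
  "sc_run \<sigma> [] st = st"
| "sc_run \<sigma> (x # xs) [] = sc_run \<sigma> xs [x]"
| "sc_run \<sigma> (x # xs) (y # st) =
     (if contains (x # y # st) \<sigma> then y # sc_run \<sigma> (x # xs) st
      else sc_run \<sigma> xs (x # y # st))"
  by pat_completeness auto
termination
  by (relation "measure (\<lambda>(\<sigma>, xs, st). 2 * length xs + length st)") auto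

definition SC :: "vpattern \<Rightarrow> nat list \<Rightarrow> nat list" where
  "SC \<sigma> \<tau> = sc_run \<sigma> \<tau> []"

definition west_s :: "nat list \<Rightarrow> nat list" where
  "west_s = SC ([2, 1], {})"

definition is_perm :: "nat list \<Rightarrow> bool" where
  "is_perm \<tau> \<longleftrightarrow> \<tau> \<noteq> [] \<and> distinct \<tau> \<and> set \<tau> = {1..length \<tau>}"

definition perm_contains :: "nat list \<Rightarrow> nat list \<Rightarrow> bool" where
  "perm_contains \<pi> \<tau> \<longleftrightarrow> contains \<pi> (\<tau>, {})"

definition perm_class :: "nat list set \<Rightarrow> bool" where
  "perm_class \<Pi> \<longleftrightarrow> (\<forall>\<pi> \<in> \<Pi>. is_perm \<pi>) \<and>
     (\<forall>\<pi> \<in> \<Pi>. \<forall>\<tau>. is_perm \<tau> \<and> perm_contains \<pi> \<tau> \<longrightarrow> \<tau> \<in> \<Pi>)"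

definition Sort_SC :: "vpattern \<Rightarrow> nat list set" where
  "Sort_SC \<sigma> = {\<tau>. is_perm \<tau> \<and> west_s (SC \<sigma> \<tau>) = [1..<Suc (length \<tau>)]}"

end

theory Submission imports Defs begin
fun choose_l :: "nat \<Rightarrow> nat list \<Rightarrow> nat list list" where
  "choose_l 0 xs = [[]]"
| "choose_l (Suc k) [] = []"
| "choose_l (Suc k) (x # xs) = map ((#) x) (choose_l k xs) @ choose_l (Suc k) xs"

lemma choose_l_set: "sorted_wrt (<) xs \<Longrightarrow>
  set (choose_l k xs) = {ks. length ks = k \<and> sorted_wrt (<) ks \<and> set ks \<subseteq> set xs}"
proof (induction k xs rule: choose_l.induct)
  case (1 xs) then show ?case by auto
next
  case (2 k) then show ?case by auto
next
  case (3 k x xs)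
  have IH1: "set (choose_l k xs) = {ks. length ks = k \<and> sorted_wrt (<) ks \<and> set ks \<subseteq> set xs}"
    using 3 by auto
  have IH2: "set (choose_l (Suc k) xs) = {ks. length ks = Suc k \<and> sorted_wrt (<) ks \<and> set ks \<subseteq> set xs}"
    using 3 by auto
  show ?case
  proof (rule set_eqI, rule iffI)
    fix ks assume "ks \<in> set (choose_l (Suc k) (x # xs))"
    then show "ks \<in> {ks. length ks = Suc k \<and> sorted_wrt (<) ks \<and> set ks \<subseteq> set (x # xs)}"
      using IH1 IH2 3(3) by fastforce
  next
    fix ks assume A: "ks \<in> {ks. length ks = Suc k \<and> sorted_wrt (<) ks \<and> set ks \<subseteq> set (x # xs)}"
    then obtain y ys where ks: "ks = y # ys" by (cases "ks") auto
    show "ks \<in> set (choose_l (Suc k) (x # xs))"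
    proof (cases "y = x")
      case True
      have "set ys \<subseteq> set xs" using A ks True 3(3) by auto
      then show ?thesis using A ks True IH1 by auto
    next
      case False
      have "y \<in> set xs" using A ks False by auto
      then have "y > x" using 3(3) by auto
      have "\<forall>z \<in> set ys. z > x" using A ks \<open>y > x\<close> by auto
      then have "set ys \<subseteq> set xs" using A ks by auto
      then have "set ks \<subseteq> set xs" using ks \<open>y \<in> set xs\<close> by auto
      then show ?thesis using A IH2 by auto
    qed
  qed
qed

lemma same_order_code[code]: "same_order xs ys = (length xs = length ys \<and>
   list_all (\<lambda>i. list_all (\<lambda>j. (xs ! i < xs ! j) = (ys ! i < ys ! j)) [0..<length xs]) [0..<length xs])"
  unfolding same_order_def list_all_iff by auto

lemma contains_code[code]: "contains w \<sigma> = list_ex (\<lambda>ks.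
     (\<forall>k \<in> snd \<sigma>. Suc k < length ks \<longrightarrow> ks ! Suc k = Suc (ks ! k)) \<and>
     same_order (map (\<lambda>i. w ! i) ks) (fst \<sigma>)) (choose_l (length (fst \<sigma>)) [0..<length w])"
proof -
  have S: "set (choose_l (length (fst \<sigma>)) [0..<length w]) = {ks. length ks = length (fst \<sigma>) \<and> sorted_wrt (<) ks \<and> (\<forall>i \<in> set ks. i < length w)}"
    by (subst choose_l_set) (auto simp: sorted_wrt_upt)
  show ?thesis unfolding contains_def list_ex_iff S by auto
qed

lemma key: assumes "\<pi> \<in> Sort_SC \<sigma>" "is_perm \<tau>" "perm_contains \<pi> \<tau>" "\<tau> \<notin> Sort_SC \<sigma>"
  shows "\<not> perm_class (Sort_SC \<sigma>)"
  using assms unfolding perm_class_def by blast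

lemma case_gen: assumes "\<pi> \<in> Sort_SC \<sigma>" "is_perm \<tau> \<and> perm_contains \<pi> \<tau> \<and> \<tau> \<notin> Sort_SC \<sigma>"
  shows "\<not> perm_class (Sort_SC \<sigma>)"
  using assms key by blast

lemma c0: "\<not> perm_class (Sort_SC ([2,1,3], {0}))"
  apply (rule case_gen[where \<pi>="[4,1,3,2]" and \<tau>="[1,3,2]"])
  unfolding Sort_SC_def mem_Collect_eq west_s_def SC_def is_perm_def perm_contains_def
  by code_simp+

lemma c1: "\<not> perm_class (Sort_SC ([3,1,2], {0}))"
  apply (rule case_gen[where \<pi>="[3,1,4,2]" and \<tau>="[1,3,2]"])
  unfolding Sort_SC_def mem_Collect_eq west_s_def SC_def is_perm_def perm_contains_def
  by code_simp+

lemma c2: "\<not> perm_class (Sort_SC ([2,1,3], {1}))"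
  apply (rule case_gen[where \<pi>="[3,1,4,2]" and \<tau>="[1,3,2]"])
  unfolding Sort_SC_def mem_Collect_eq west_s_def SC_def is_perm_def perm_contains_def
  by code_simp+

lemma c3: "\<not> perm_class (Sort_SC ([2,3,1], {1}))"
  apply (rule case_gen[where \<pi>="[3,6,1,4,2,5]" and \<tau>="[1,3,2,4]"])
  unfolding Sort_SC_def mem_Collect_eq west_s_def SC_def is_perm_def perm_contains_def
  by code_simp+

lemma c4: "\<not> perm_class (Sort_SC ([3,1,2], {1}))"
  apply (rule case_gen[where \<pi>="[3,1,4,2]" and \<tau>="[1,3,2]"])
  unfolding Sort_SC_def mem_Collect_eq west_s_def SC_def is_perm_def perm_contains_def
  by code_simp+

theorem mainTheorem20:
  assumes "\<sigma> \<in> {([2,1,3], {0}), ([3,1,2], {0}), ([2,1,3], {1}), ([2,3,1], {1}), ([3,1,2], {1})}"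
  shows "\<not> perm_class (Sort_SC \<sigma>)"
  using assms c0 c1 c2 c3 c4 by blast

end
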